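(* Let $G$ be a free group and $f:G\to G$ an endomorphism such that for every finitely generated free group $H$ and every homomorphism $g:H\to G$, the composition $f\circ g$ is conjugate to $g$ (i.e. there is $c\in G$ with $f(g(h))=c^{-1}g(h)c$ for all $h\in H$). Then $f$ is conjugate to $\mathrm{id}_G$, i.e. there is $c\in G$ with $f(x)=c^{-1}xc$ for all $x\in G$. *)

theory Defs
  imports "HOL-Algebra.Generated_Groups"
begin

text \<open>Words over an alphabet X: letters (x, True) stand for x, (x, False) for x inverse.\<close>

fun word_eval :: "('a, 'b) monoid_scheme \<Rightarrow> ('a \<times> bool) list \<Rightarrow> 'a" where
  "word_eval G [] = \<one>\<^bsub>G\<^esub>"
| "word_eval G ((x, b) # w) =
     (if b then x else inv\<^bsub>G\<^esub> x) \<otimes>\<^bsub>G\<^esub> word_eval G w"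

fun reduced_word :: "('a \<times> bool) list \<Rightarrow> bool" where
  "reduced_word [] = True"
| "reduced_word [_] = True"
| "reduced_word ((x, b) # (y, c) # w) =
     (\<not> (x = y \<and> b \<noteq> c) \<and> reduced_word ((y, c) # w))"

definition free_basis :: "('a, 'b) monoid_scheme \<Rightarrow> 'a set \<Rightarrow> bool" where
  "free_basis G X \<longleftrightarrow>
     X \<subseteq> carrier G \<and> generate G X = carrier G \<and>
     (\<forall>w. set (map fst w) \<subseteq> X \<and> reduced_word w \<and> w \<noteq> [] \<longrightarrow> word_eval G w \<noteq> \<one>\<^bsub>G\<^esub>)"

definition free_group :: "('a, 'b) monoid_scheme \<Rightarrow> bool" where
  "free_group G \<longleftrightarrow> group G \<and> (\<exists>X. free_basis G X)"

definition fg_free_group :: "('a, 'b) monoid_scheme \<Rightarrow> bool" where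
  "fg_free_group G \<longleftrightarrow> group G \<and> (\<exists>X. finite X \<and> free_basis G X)"

end

theory Submission
  imports Defs "HOL-Library.Countable_Set"
begin

definition wflip :: "'a \<times> bool \<Rightarrow> 'a \<times> bool" where "wflip p = (fst p, \<not> snd p)"
definition wrel :: "'a \<times> bool \<Rightarrow> 'a \<times> bool \<Rightarrow> bool" where
  "wrel p q \<longleftrightarrow> \<not> (fst p = fst q \<and> snd p \<noteq> snd q)"

lemma reduced_succ: "reduced_word w = successively wrel w"
  by (induction w rule: reduced_word.induct) (auto simp: wrel_def)

lemma wrel_flip[simp]: "wrel (wflip q) (wflip p) = wrel p q"
  by (auto simp: wrel_def wflip_def)

lemma word_eval_Cons': "word_eval G (p # w) = (if snd p then fst p else inv\<^bsub>G\<^esub> fst p) \<otimes>\<^bsub>G\<^esub> word_eval G w"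
  by (cases p) simp

declare word_eval.simps(2)[simp del]
declare word_eval_Cons'[simp]

definition rcons :: "'a \<times> bool \<Rightarrow> ('a \<times> bool) list \<Rightarrow> ('a \<times> bool) list" where
  "rcons a w = (case w of [] \<Rightarrow> [a] | b # w' \<Rightarrow> if fst a = fst b \<and> snd a \<noteq> snd b then w' else a # w)"

context group begin

lemma word_eval_closed[simp]: "set (map fst w) \<subseteq> carrier G \<Longrightarrow> word_eval G w \<in> carrier G"
  by (induction w) auto

lemma word_eval_append: "set (map fst u) \<subseteq> carrier G \<Longrightarrow> set (map fst v) \<subseteq> carrier G \<Longrightarrow>
  word_eval G (u @ v) = word_eval G u \<otimes> word_eval G v"
  by (induction u) (auto simp: m_assoc)

lemma word_eval_flip: "set (map fst w) \<subseteq> carrier G \<Longrightarrow>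
  word_eval G (rev (map wflip w)) = inv (word_eval G w)"
proof (induction w)
  case Nil then show ?case by simp
next
  case (Cons p w)
  have p: "fst p \<in> carrier G" using Cons by auto
  have w: "set (map fst w) \<subseteq> carrier G" using Cons by auto
  have "word_eval G (rev (map wflip (p # w))) = word_eval G (rev (map wflip w)) \<otimes> word_eval G [wflip p]"
  proof -
    have w': "set (map fst (rev (map wflip w))) \<subseteq> carrier G" using w by (auto simp: wflip_def)
    show ?thesis using word_eval_append[OF w', of "[wflip p]"] p by (simp add: wflip_def)
  qed
  also have "\<dots> = inv (word_eval G w) \<otimes> inv (if snd p then fst p else inv fst p)"
  proof -
    have "word_eval G [wflip p] = inv (if snd p then fst p else inv fst p)"
      using p by (simp add: wflip_def)
    then show ?thesis using Cons.IH w by simp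
  qed
  also have "\<dots> = inv ((if snd p then fst p else inv fst p) \<otimes> word_eval G w)"
    using p w by (simp add: inv_mult_group)
  finally show ?case by simp
qed

lemma rcons_props:
  assumes "fst a \<in> B" "set (map fst w) \<subseteq> B" "B \<subseteq> carrier G" "reduced_word w"
  shows "set (map fst (rcons a w)) \<subseteq> B \<and> reduced_word (rcons a w) \<and>
    word_eval G (rcons a w) = word_eval G (a # w)"
proof (cases w)
  case Nil then show ?thesis using assms by (simp add: rcons_def)
next
  case (Cons b w')
  show ?thesis
  proof (cases "fst a = fst b \<and> snd a \<noteq> snd b")
    case True
    have c: "fst b \<in> carrier G" "set (map fst w') \<subseteq> carrier G" using assms Cons by auto
    have "word_eval G (a # w) = word_eval G w'"
      using True c Cons by (cases "snd a") (auto simp: m_assoc[symmetric])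
    moreover have "reduced_word w'" using assms(4) Cons by (auto simp add: reduced_succ successively_Cons)
    ultimately show ?thesis using True Cons assms by (simp add: rcons_def)
  next
    case False
    then show ?thesis using assms Cons by (auto simp add: rcons_def reduced_succ wrel_def)
  qed
qed

lemma foldr_rcons:
  assumes "set (map fst u) \<subseteq> B" "set (map fst v) \<subseteq> B" "B \<subseteq> carrier G" "reduced_word v"
  shows "set (map fst (foldr rcons u v)) \<subseteq> B \<and> reduced_word (foldr rcons u v) \<and>
    word_eval G (foldr rcons u v) = word_eval G u \<otimes> word_eval G v"
  using assms(1)
proof (induction u)
  case Nil then show ?case using assms by auto
next
  case (Cons a u)
  then have IH: "set (map fst (foldr rcons u v)) \<subseteq> B \<and> reduced_word (foldr rcons u v) \<and>
    word_eval G (foldr rcons u v) = word_eval G u \<otimes> word_eval G v" by auto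
  have a: "fst a \<in> B" using Cons by auto
  have "set (map fst u) \<subseteq> carrier G" "set (map fst v) \<subseteq> carrier G" "fst a \<in> carrier G"
    using Cons assms by auto
  then show ?case using rcons_props[OF a _ assms(3), of "foldr rcons u v"] IH
    by (auto simp: m_assoc)
qed

lemma gen_word:
  assumes "B \<subseteq> carrier G" "g \<in> generate G B"
  shows "\<exists>w. set (map fst w) \<subseteq> B \<and> reduced_word w \<and> word_eval G w = g"
  using assms(2)
proof (induction rule: generate.induct)
  case one
  then show ?case by (intro exI[of _ "[]"]) auto
next
  case (incl h)
  then show ?case using assms by (intro exI[of _ "[(h, True)]"]) auto
next
  case (inv h)
  then show ?case using assms by (intro exI[of _ "[(h, False)]"]) auto
next
  case (eng h1 h2)
  then obtain w1 w2 where "set (map fst w1) \<subseteq> B \<and> reduced_word w1 \<and> word_eval G w1 = h1"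
    "set (map fst w2) \<subseteq> B \<and> reduced_word w2 \<and> word_eval G w2 = h2" by blast
  then show ?case using foldr_rcons[of w1 B w2] assms by blast
qed

end

lemma reduced_flip: "reduced_word v \<Longrightarrow> reduced_word (rev (map wflip v))"
  by (simp add: reduced_succ successively_map)

lemma wrel_F: "p \<noteq> (t, True) \<Longrightarrow> wrel p (t, False)"
  by (cases p) (auto simp: wrel_def)
lemma wrel_T: "p \<noteq> (t, False) \<Longrightarrow> wrel (t, True) p"
  by (cases p) (auto simp: wrel_def)
lemma wrel_flipb: "a \<noteq> b \<Longrightarrow> wrel (wflip b) a"
  by (auto simp: wrel_def wflip_def prod_eq_iff)

context group begin

lemma word_unique:
  assumes fb: "free_basis G X"
  shows "set (map fst u) \<subseteq> X \<Longrightarrow> set (map fst v) \<subseteq> X \<Longrightarrow> reduced_word u \<Longrightarrow> reduced_word v \<Longrightarrow>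
    word_eval G u = word_eval G v \<Longrightarrow> u = v"
proof (induction u arbitrary: v)
  case Nil
  then show ?case using fb unfolding free_basis_def by (metis word_eval.simps(1))
next
  case (Cons a u)
  have XG: "X \<subseteq> carrier G" using fb by (simp add: free_basis_def)
  show ?case
  proof (cases v)
    case Nil
    then show ?thesis using Cons.prems fb unfolding free_basis_def by (metis word_eval.simps(1) list.distinct(1))
  next
    case (Cons b v')
    have ca: "fst a \<in> carrier G" "set (map fst u) \<subseteq> carrier G" using Cons.prems XG by auto
    have cb: "fst b \<in> carrier G" "set (map fst v') \<subseteq> carrier G" using Cons.prems XG Cons by auto
    show ?thesis
    proof (cases "a = b")
      case True
      have "word_eval G u = word_eval G v'"
        using Cons.prems(5) Cons True ca cb by (cases "snd b") auto
      moreover have "reduced_word u" "reduced_word v'" using Cons.prems(3,4) Cons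
        by (auto simp: reduced_succ successively_Cons)
      ultimately have "u = v'" using Cons.IH Cons.prems Cons by auto
      then show ?thesis using True Cons by simp
    next
      case False
      define z where "z = rev (map wflip v) @ (a # u)"
      have vc: "set (map fst v) \<subseteq> carrier G" "set (map fst (rev (map wflip v))) \<subseteq> carrier G"
        using cb Cons by (auto simp: wflip_def)
      have "word_eval G z = inv (word_eval G v) \<otimes> word_eval G (a # u)"
        unfolding z_def using word_eval_append[OF vc(2), of "a # u"] ca word_eval_flip[OF vc(1)] by simp
      also have "\<dots> = \<one>" using Cons.prems(5) vc by simp
      finally have e: "word_eval G z = \<one>" .
      have r: "reduced_word z"
      proof -
        have "reduced_word (rev (map wflip v))" using reduced_flip Cons.prems(4) by blast
        moreover have "last (rev (map wflip v)) = wflip b" using Cons by (simp add: last_rev)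
        ultimately show ?thesis unfolding z_def using Cons.prems(3) wrel_flipb[OF False]
          unfolding reduced_succ successively_append_iff by simp
      qed
      have "set (map fst z) \<subseteq> X" using Cons.prems(1,2) unfolding z_def by (auto simp: wflip_def)
      then show ?thesis using e r fb unfolding free_basis_def z_def by blast
    qed
  qed
qed

lemma commute_caseA:
  assumes fb: "free_basis G X" and xy: "x \<in> X" "y \<in> X" "x \<noteq> y"
    and w: "set (map fst w) \<subseteq> X" "reduced_word w" and e: "word_eval G w = e"
    and cx: "x \<otimes> e = e \<otimes> x"
    and hd: "w \<noteq> []" "hd w = (x, False)" "last w = (y, True)"
  shows False
proof -
  have XG: "X \<subseteq> carrier G" using fb by (simp add: free_basis_def)
  obtain w' where w': "w = (x, False) # w'" using hd by (cases w) auto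
  have w'ne: "w' \<noteq> []" using hd w' xy by auto
  have c: "set (map fst w') \<subseteq> carrier G" "x \<in> carrier G" using w w' XG xy by auto
  have ec: "e \<in> carrier G" using e w XG by auto
  have "e = inv x \<otimes> word_eval G w'" using e w' by simp
  then have "word_eval G w' = x \<otimes> e" using c ec
    by (simp add: m_assoc[symmetric])
  then have "word_eval G (w' @ [(x, False)]) = x \<otimes> e \<otimes> inv x"
    using word_eval_append[OF c(1), of "[(x, False)]"] c by simp
  also have "\<dots> = e" using cx c ec by (simp add: m_assoc)
  finally have ev: "word_eval G (w' @ [(x, False)]) = word_eval G w" using e by simp
  have lw': "last w' = (y, True)" using hd w' w'ne by simp
  have r: "reduced_word (w' @ [(x, False)])" using w(2) w' w'ne lw' xy
    by (auto simp: reduced_succ successively_append_iff successively_Cons wrel_def)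
  have "w' @ [(x, False)] = w"
    using word_unique[OF fb _ w(1) r w(2) ev] w w' xy by auto
  then show False using hd(3) xy by (metis last_snoc prod.inject)
qed

lemma commute_trivial:
  assumes fb: "free_basis G X" and xy: "x \<in> X" "y \<in> X" "x \<noteq> y"
    and ec: "e \<in> carrier G" and cx: "x \<otimes> e = e \<otimes> x" and cy: "y \<otimes> e = e \<otimes> y"
  shows "e = \<one>"
proof (rule ccontr)
  assume ne: "e \<noteq> \<one>"
  have XG: "X \<subseteq> carrier G" and gen: "generate G X = carrier G" using fb by (auto simp: free_basis_def)
  obtain w where w: "set (map fst w) \<subseteq> X" "reduced_word w" "word_eval G w = e"
    using gen_word[OF XG] ec gen by blast
  have wne: "w \<noteq> []" using w ne by auto
  have key: "hd w = (t, False) \<or> last w = (t, True)" if t: "t \<in> X" "t \<otimes> e = e \<otimes> t" for t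
  proof (rule ccontr)
    assume nt: "\<not> ?thesis"
    have tc: "t \<in> carrier G" using t XG by auto
    have wc: "set (map fst w) \<subseteq> carrier G" using w XG by auto
    define z where "z = (t, True) # w @ [(t, False)]"
    have "word_eval G z = t \<otimes> (e \<otimes> inv t)"
      unfolding z_def using word_eval_append[OF wc, of "[(t, False)]"] tc w by simp
    also have "\<dots> = (t \<otimes> e) \<otimes> inv t" using tc ec by (simp add: m_assoc)
    also have "\<dots> = e \<otimes> (t \<otimes> inv t)" using t(2) tc ec by (simp add: m_assoc)
    also have "\<dots> = e" using tc ec by simp
    finally have ev: "word_eval G z = word_eval G w" using w by simp
    have r1: "reduced_word (w @ [(t, False)])" using w(2) wne wrel_F[of "last w" t] nt
      unfolding reduced_succ successively_append_iff by simp
    have r: "reduced_word z" unfolding z_def using r1 wne wrel_T[of "hd w" t] nt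
      unfolding reduced_succ successively_Cons by simp
    have "z = w" using word_unique[OF fb _ w(1) r w(2) ev] w t unfolding z_def by auto
    then have "length z = length w" by simp
    then show False unfolding z_def by simp
  qed
  have kx: "hd w = (x, False) \<or> last w = (x, True)" using key xy cx by blast
  have ky: "hd w = (y, False) \<or> last w = (y, True)" using key xy cy by blast
  show False
  proof (cases "hd w = (x, False)")
    case True
    then have "last w = (y, True)" using ky xy by auto
    then show False using commute_caseA[OF fb xy w cx wne True] by simp
  next
    case False
    then have "last w = (x, True)" "hd w = (y, False)" using kx ky xy by auto
    then show False using commute_caseA[OF fb xy(2,1) _ w cy wne] xy by auto
  qed
qed

end

lemma hom_word:
  assumes "group K" "group L" "h \<in> hom K L"
  shows "set (map fst w) \<subseteq> carrier K \<Longrightarrow> h (word_eval K w) = word_eval L (map (apfst h) w)"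
proof (induction w)
  case Nil
  then show ?case using hom_one[OF assms(3,1,2)] by simp
next
  case (Cons p w)
  interpret gh: group_hom K L h using assms by (simp add: group_hom_def group_hom_axioms_def)
  have c: "fst p \<in> carrier K" "set (map fst w) \<subseteq> carrier K" using Cons by auto
  have "h (word_eval K (p # w)) = h (if snd p then fst p else inv\<^bsub>K\<^esub> fst p) \<otimes>\<^bsub>L\<^esub> h (word_eval K w)"
    using c by (simp add: group.word_eval_closed[OF assms(1)])
  also have "\<dots> = word_eval L (map (apfst h) (p # w))"
    using Cons c by (cases "snd p") (auto simp: apfst_def map_prod_def split: prod.splits)
  finally show ?case .
qed

lemma sub_free:
  fixes G (structure)
  assumes gG: "group G" and fb: "free_basis G X" and BX: "B \<subseteq> X" and fin: "finite B"
  shows "\<exists>(H :: nat monoid) g. fg_free_group H \<and> g \<in> hom H G \<and> generate G B \<subseteq> g ` carrier H"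
proof -
  interpret group G by fact
  have XG: "X \<subseteq> carrier G" using fb by (simp add: free_basis_def)
  have BG: "B \<subseteq> carrier G" using BX XG by auto
  define S where "S = generate G B"
  have sub: "subgroup S G" unfolding S_def using generate_is_subgroup[OF BG] .
  have SG: "\<And>s. s \<in> S \<Longrightarrow> s \<in> carrier G" using subgroup.subset[OF sub] by blast
  have Sm: "\<And>s t. s \<in> S \<Longrightarrow> t \<in> S \<Longrightarrow> s \<otimes> t \<in> S" using subgroup.m_closed[OF sub] by blast
  have Si: "\<And>s. s \<in> S \<Longrightarrow> inv s \<in> S" using subgroup.m_inv_closed[OF sub] by blast
  have S1: "\<one> \<in> S" using subgroup.one_closed[OF sub] by blast
  have BS: "B \<subseteq> S" unfolding S_def by (auto intro: generate.incl)
  have "S \<subseteq> word_eval G ` lists (B \<times> UNIV)"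
  proof
    fix s assume "s \<in> S"
    then obtain w where "set (map fst w) \<subseteq> B" "word_eval G w = s"
      using gen_word[OF BG] unfolding S_def by blast
    moreover have "w \<in> lists (B \<times> UNIV)" using calculation(1) by (auto simp: in_lists_conv_set)
    ultimately show "s \<in> word_eval G ` lists (B \<times> UNIV)" by blast
  qed
  moreover have "countable (lists (B \<times> (UNIV :: bool set)))"
    using fin by (intro countable_lists countable_finite) auto
  ultimately have cS: "countable S" using countable_subset countable_image by metis
  define \<phi> where "\<phi> = to_nat_on S"
  define \<psi> where "\<psi> = inv_into S \<phi>"
  have inj: "inj_on \<phi> S" unfolding \<phi>_def using cS by auto
  have psiphi[simp]: "\<And>s. s \<in> S \<Longrightarrow> \<psi> (\<phi> s) = s" unfolding \<psi>_def using inj by simp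
  define H where "H = \<lparr>carrier = \<phi> ` S, mult = (\<lambda>a b. \<phi> (\<psi> a \<otimes> \<psi> b)), one = \<phi> \<one>\<rparr>"
  have cH[simp]: "carrier H = \<phi> ` S" and mH[simp]: "\<And>a b. a \<otimes>\<^bsub>H\<^esub> b = \<phi> (\<psi> a \<otimes> \<psi> b)"
    and oH[simp]: "\<one>\<^bsub>H\<^esub> = \<phi> \<one>" unfolding H_def by auto
  have gH: "group H"
  proof (rule groupI)
    show "\<And>x y. x \<in> carrier H \<Longrightarrow> y \<in> carrier H \<Longrightarrow> x \<otimes>\<^bsub>H\<^esub> y \<in> carrier H"
      using Sm by auto
    show "\<one>\<^bsub>H\<^esub> \<in> carrier H" using S1 by auto
    show "\<And>x y z. x \<in> carrier H \<Longrightarrow> y \<in> carrier H \<Longrightarrow> z \<in> carrier H \<Longrightarrow>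
      x \<otimes>\<^bsub>H\<^esub> y \<otimes>\<^bsub>H\<^esub> z = x \<otimes>\<^bsub>H\<^esub> (y \<otimes>\<^bsub>H\<^esub> z)"
      using Sm SG by (auto simp: m_assoc)
    show "\<And>x. x \<in> carrier H \<Longrightarrow> \<one>\<^bsub>H\<^esub> \<otimes>\<^bsub>H\<^esub> x = x"
      using S1 SG by auto
    show "\<And>x. x \<in> carrier H \<Longrightarrow> \<exists>y\<in>carrier H. y \<otimes>\<^bsub>H\<^esub> x = \<one>\<^bsub>H\<^esub>"
    proof -
      fix x assume "x \<in> carrier H"
      then obtain s where s: "s \<in> S" "x = \<phi> s" by auto
      then show "\<exists>y\<in>carrier H. y \<otimes>\<^bsub>H\<^esub> x = \<one>\<^bsub>H\<^esub>"
        using Si SG by (intro bexI[of _ "\<phi> (inv s)"]) auto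
    qed
  qed
  have psihom: "\<psi> \<in> hom H G"
    by (rule homI) (auto simp: Sm SG)
  have gK: "group (G\<lparr>carrier := S\<rparr>)" using subgroup.subgroup_is_group[OF sub gG] .
  have phihom: "\<phi> \<in> hom (G\<lparr>carrier := S\<rparr>) H"
    by (rule homI) (auto simp: Sm SG)
  interpret ghK: group_hom "G\<lparr>carrier := S\<rparr>" H \<phi>
    using gK gH phihom by (simp add: group_hom_def group_hom_axioms_def)
  have gen: "generate H (\<phi> ` B) = carrier H"
    using ghK.generate_img[of B] BS generate_consistent[OF BS sub] by (simp add: S_def)
  have free: "word_eval H w \<noteq> \<one>\<^bsub>H\<^esub>"
    if w: "set (map fst w) \<subseteq> \<phi> ` B" "reduced_word w" "w \<noteq> []" for w
  proof
    assume e: "word_eval H w = \<one>\<^bsub>H\<^esub>"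
    have wH: "set (map fst w) \<subseteq> carrier H" using w BS by auto
    have "word_eval G (map (apfst \<psi>) w) = \<psi> (word_eval H w)"
      using hom_word[OF gH gG psihom wH] by simp
    also have "\<dots> = \<one>" using e S1 by simp
    finally have e2: "word_eval G (map (apfst \<psi>) w) = \<one>" .
    have l: "set (map fst (map (apfst \<psi>) w)) \<subseteq> X"
    proof
      fix a assume "a \<in> set (map fst (map (apfst \<psi>) w))"
      then obtain p where p: "p \<in> set w" "a = \<psi> (fst p)" by auto
      then have "fst p \<in> \<phi> ` B" using w(1) by auto
      then obtain b where "b \<in> B" "fst p = \<phi> b" by auto
      moreover then have "b \<in> S" using BS by auto
      ultimately show "a \<in> X" using p BX psiphi[of b] by auto
    qed
    have injpsi: "inj_on \<psi> (\<phi> ` B)"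
    proof (rule inj_onI)
      fix u v assume "u \<in> \<phi> ` B" "v \<in> \<phi> ` B" "\<psi> u = \<psi> v"
      then obtain b1 b2 where "b1 \<in> S" "b2 \<in> S" "u = \<phi> b1" "v = \<phi> b2" "\<psi> u = \<psi> v" using BS by blast
      then show "u = v" by simp
    qed
    have "successively wrel (map (apfst \<psi>) w) = successively wrel w"
      unfolding successively_map
    proof (rule successively_cong)
      fix p q assume "p \<in> set w" "q \<in> set w"
      then have "fst p \<in> \<phi> ` B" "fst q \<in> \<phi> ` B" using w by auto
      then have "\<psi> (fst p) = \<psi> (fst q) \<longleftrightarrow> fst p = fst q"
        using inj_on_eq_iff[OF injpsi] by blast
      then show "wrel (apfst \<psi> p) (apfst \<psi> q) = wrel p q"
        by (simp add: wrel_def)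
    qed simp
    then have r: "reduced_word (map (apfst \<psi>) w)" using w by (simp add: reduced_succ)
    have ne: "map (apfst \<psi>) w \<noteq> []" using w(3) by simp
    have "\<forall>w. set (map fst w) \<subseteq> X \<and> reduced_word w \<and> w \<noteq> [] \<longrightarrow> word_eval G w \<noteq> \<one>"
      using fb unfolding free_basis_def by blast
    then show False using l r e2 ne by blast
  qed
  have "fg_free_group H"
    unfolding fg_free_group_def free_basis_def using gH fin gen free BS
    by (intro conjI exI[of _ "\<phi> ` B"]) auto
  moreover have "generate G B \<subseteq> \<psi> ` carrier H"
  proof
    fix s assume "s \<in> generate G B"
    then have s: "s \<in> S" unfolding S_def .
    show "s \<in> \<psi> ` carrier H" by (rule image_eqI[of _ _ "\<phi> s"]) (simp_all add: s)
  qed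
  ultimately show ?thesis using psihom by blast
qed


context group begin
lemma conj_eq_comm: "a \<in> carrier G \<Longrightarrow> b \<in> carrier G \<Longrightarrow> x \<in> carrier G \<Longrightarrow>
  inv a \<otimes> x \<otimes> a = inv b \<otimes> x \<otimes> b \<Longrightarrow> x \<otimes> (b \<otimes> inv a) = (b \<otimes> inv a) \<otimes> x"
proof -
  assume c: "a \<in> carrier G" "b \<in> carrier G" "x \<in> carrier G" and e: "inv a \<otimes> x \<otimes> a = inv b \<otimes> x \<otimes> b"
  have "(b \<otimes> inv a) \<otimes> x = b \<otimes> (inv a \<otimes> x \<otimes> a) \<otimes> inv a"
    using c by (simp add: m_assoc)
  also have "\<dots> = b \<otimes> (inv b \<otimes> x \<otimes> b) \<otimes> inv a" using e by simp
  also have "\<dots> = x \<otimes> (b \<otimes> inv a)" using c by (simp add: m_assoc[symmetric])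
  finally show ?thesis by simp
qed

lemma conj_inv: "c \<in> carrier G \<Longrightarrow> h \<in> carrier G \<Longrightarrow> inv (inv c \<otimes> h \<otimes> c) = inv c \<otimes> inv h \<otimes> c"
  by (simp add: inv_mult_group m_assoc)

lemma cancel_left: "c \<in> carrier G \<Longrightarrow> y \<in> carrier G \<Longrightarrow> c \<otimes> (inv c \<otimes> y) = y"
  by (simp add: m_assoc[symmetric])

lemma conj_mult: "c \<in> carrier G \<Longrightarrow> h \<in> carrier G \<Longrightarrow> k \<in> carrier G \<Longrightarrow>
  (inv c \<otimes> h \<otimes> c) \<otimes> (inv c \<otimes> k \<otimes> c) = inv c \<otimes> (h \<otimes> k) \<otimes> c"
proof -
  assume c: "c \<in> carrier G" "h \<in> carrier G" "k \<in> carrier G"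
  have "(inv c \<otimes> h \<otimes> c) \<otimes> (inv c \<otimes> k \<otimes> c) = inv c \<otimes> h \<otimes> (c \<otimes> inv c) \<otimes> k \<otimes> c"
    using c by (simp add: m_assoc cancel_left)
  also have "\<dots> = inv c \<otimes> (h \<otimes> k) \<otimes> c" using c by (simp add: m_assoc cancel_left)
  finally show ?thesis .
qed
end

lemma (in group) main_aux:
  assumes fb: "free_basis G X" and "f \<in> hom G G"
    and "\<And>(H :: nat monoid) g. fg_free_group H \<Longrightarrow> g \<in> hom H G \<Longrightarrow>
           \<exists>c\<in>carrier G. \<forall>h\<in>carrier H. f (g h) = inv c \<otimes> g h \<otimes> c"
  shows "\<exists>c\<in>carrier G. \<forall>x\<in>carrier G. f x = inv c \<otimes> x \<otimes> c"
proof -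
  have gG: "group G" by (rule is_group)
  interpret gh: group_hom G G f using gG assms(2) by (simp add: group_hom_def group_hom_axioms_def)
  have XG: "X \<subseteq> carrier G" and gen: "generate G X = carrier G" using fb by (auto simp: free_basis_def)
  have conjB: "\<exists>c\<in>carrier G. \<forall>s\<in>B. f s = inv c \<otimes> s \<otimes> c" if B: "finite B" "B \<subseteq> X" for B
  proof -
    obtain H :: "nat monoid" and g where H: "fg_free_group H" "g \<in> hom H G" "generate G B \<subseteq> g ` carrier H"
      using sub_free[OF gG fb B(2,1)] by blast
    obtain c where c: "c \<in> carrier G" "\<forall>h\<in>carrier H. f (g h) = inv c \<otimes> g h \<otimes> c"
      using assms(3)[OF H(1,2)] by blast
    have "B \<subseteq> generate G B" by (auto intro: generate.incl)
    then have "\<forall>s\<in>B. f s = inv c \<otimes> s \<otimes> c" using H(3) c(2) by blast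
    then show ?thesis using c(1) by blast
  qed
  have ext: "\<forall>x\<in>carrier G. f x = inv c \<otimes> x \<otimes> c"
    if c: "c \<in> carrier G" "\<forall>z\<in>X. f z = inv c \<otimes> z \<otimes> c" for c
  proof -
    have "f x = inv c \<otimes> x \<otimes> c" if x: "x \<in> generate G X" for x
      using x
    proof (induction rule: generate.induct)
      case one
      then show ?case using c by (simp add: m_assoc)
    next
      case (incl h)
      then show ?case using c by simp
    next
      case (inv h)
      then have h: "h \<in> carrier G" using XG by auto
      have "f (inv h) = inv (f h)" using h by simp
      also have "\<dots> = inv c \<otimes> inv h \<otimes> c" using inv c h by (simp add: conj_inv)
      finally show ?case .
    next
      case (eng h1 h2)
      then have h: "h1 \<in> carrier G" "h2 \<in> carrier G" using generate_in_carrier[OF XG] by auto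
      have "f (h1 \<otimes> h2) = f h1 \<otimes> f h2" using h by simp
      also have "\<dots> = inv c \<otimes> (h1 \<otimes> h2) \<otimes> c" using eng c h by (simp add: conj_mult)
      finally show ?case .
    qed
    then show ?thesis using gen by blast
  qed
  show ?thesis
  proof (cases "\<exists>x\<in>X. \<exists>y\<in>X. x \<noteq> y")
    case True
    then obtain x y where xy: "x \<in> X" "y \<in> X" "x \<noteq> y" by blast
    obtain c0 where c0: "c0 \<in> carrier G" "\<forall>s\<in>{x, y}. f s = inv c0 \<otimes> s \<otimes> c0"
      using conjB[of "{x, y}"] xy by auto
    have "f z = inv c0 \<otimes> z \<otimes> c0" if z: "z \<in> X" for z
    proof -
      obtain cz where cz: "cz \<in> carrier G" "\<forall>s\<in>{x, y, z}. f s = inv cz \<otimes> s \<otimes> cz"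
        using conjB[of "{x, y, z}"] xy z by auto
      have xc: "x \<in> carrier G" "y \<in> carrier G" using xy XG by auto
      have "x \<otimes> (cz \<otimes> inv c0) = (cz \<otimes> inv c0) \<otimes> x"
        using conj_eq_comm[OF c0(1) cz(1) xc(1)] c0 cz by simp
      moreover have "y \<otimes> (cz \<otimes> inv c0) = (cz \<otimes> inv c0) \<otimes> y"
        using conj_eq_comm[OF c0(1) cz(1) xc(2)] c0 cz by simp
      ultimately have "cz \<otimes> inv c0 = \<one>"
        using commute_trivial[OF fb xy] c0 cz by simp
      then have "cz = c0" using c0 cz by (metis inv_equality inv_inv inv_closed)
      then show ?thesis using cz by simp
    qed
    then show ?thesis using ext c0(1) by blast
  next
    case False
    then have "finite X"
      by (metis finite.simps finite_subset insertI1 subsetI singletonI empty_iff)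
    then obtain c where "c \<in> carrier G" "\<forall>s\<in>X. f s = inv c \<otimes> s \<otimes> c" using conjB by blast
    then show ?thesis using ext by blast
  qed
qed

theorem lemma5p5:
  fixes G :: "('a, 'b) monoid_scheme" and f :: "'a \<Rightarrow> 'a"
  assumes "free_group G"
    and "f \<in> hom G G"
    and "\<And>(H :: nat monoid) g. fg_free_group H \<Longrightarrow> g \<in> hom H G \<Longrightarrow>
           \<exists>c\<in>carrier G. \<forall>h\<in>carrier H. f (g h) = inv\<^bsub>G\<^esub> c \<otimes>\<^bsub>G\<^esub> g h \<otimes>\<^bsub>G\<^esub> c"
  shows "\<exists>c\<in>carrier G. \<forall>x\<in>carrier G. f x = inv\<^bsub>G\<^esub> c \<otimes>\<^bsub>G\<^esub> x \<otimes>\<^bsub>G\<^esub> c"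
proof -
  have gG: "group G" using assms(1) by (simp add: free_group_def)
  obtain X where fb: "free_basis G X" using assms(1) by (auto simp: free_group_def)
  show ?thesis using group.main_aux[OF gG fb assms(2,3)] by blast
qed

end
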